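(* Let $(X,T)$ be a minimal topological dynamical system ($X$ compact metrisable, $T$ a group acting by homeomorphisms) with maximal equicontinuous factor map $\pi:X\to X_{max}$, let $e$ be a minimal idempotent of its Ellis semigroup, and let $\xi\in X_{max}$. The proximal relation restricted to $\pi^{-1}(\xi)$ is transitive if and only if every element of the little structure group $\Gamma_e$ fixes every point of $e(\pi^{-1}(\xi))$. In particular, the proximal relation on $X$ is transitive if and only if $\Gamma_e=\{e\}$.
   Context: The Ellis semigroup $E$ is the closure of $\{\alpha^t:t\in T\}$ in $X^X$ (pointwise convergence topology, composition as product); it has a smallest two-sided ideal $\ker E$. Minimal idempotents are the idempotents of $\ker E$; $J_{min}$ denotes the set of them. For a minimal idempotent $e$, the structure group is ${\mathcal H}_e=eEe$ (a group with identity $e$), and the little structure group $\Gamma_e$ is the subgroup of ${\mathcal H}_e$ generated by $eJ_{min}e=\{epe:p\in J_{min}\}$. Points $x,y$ are proximal if $\inf_{t} d(\alpha^t(x),\alpha^t(y))=0$ for a compatible metric $d$. *)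

theory Defs
  imports "HOL-Analysis.Analysis" "HOL-Algebra.Generated_Groups"
begin

(* A (left) action of the group 'g on the whole space 'x by homeomorphisms.
   The group T is taken with the discrete topology. *)
definition group_action_homeo :: "('g::group_add \<Rightarrow> 'x::topological_space \<Rightarrow> 'x) \<Rightarrow> bool" where
  "group_action_homeo \<alpha> \<longleftrightarrow> \<alpha> 0 = id \<and> (\<forall>s t. \<alpha> (s + t) = \<alpha> s \<circ> \<alpha> t) \<and> (\<forall>t. continuous_on UNIV (\<alpha> t))"

definition group_action_homeo_on :: "'x::topological_space set \<Rightarrow> ('g::group_add \<Rightarrow> 'x \<Rightarrow> 'x) \<Rightarrow> bool" where
  "group_action_homeo_on Z \<alpha> \<longleftrightarrow> (\<forall>t. \<alpha> t ` Z \<subseteq> Z) \<and> (\<forall>z\<in>Z. \<alpha> 0 z = z) \<and>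
     (\<forall>s t. \<forall>z\<in>Z. \<alpha> (s + t) z = \<alpha> s (\<alpha> t z)) \<and> (\<forall>t. continuous_on Z (\<alpha> t))"

definition minimal_system :: "('g::group_add \<Rightarrow> 'x::topological_space \<Rightarrow> 'x) \<Rightarrow> bool" where
  "minimal_system \<alpha> \<longleftrightarrow> (\<forall>x. closure (range (\<lambda>t. \<alpha> t x)) = UNIV)"

definition equicontinuous_on :: "'y::metric_space set \<Rightarrow> ('g \<Rightarrow> 'y \<Rightarrow> 'y) \<Rightarrow> bool" where
  "equicontinuous_on Z \<beta> \<longleftrightarrow> (\<forall>\<epsilon>>0. \<exists>\<delta>>0. \<forall>y\<in>Z. \<forall>y'\<in>Z. dist y y' < \<delta> \<longrightarrow>
       (\<forall>t. dist (\<beta> t y) (\<beta> t y') < \<epsilon>))"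

definition factor_map_onto :: "('g::group_add \<Rightarrow> 'x::topological_space \<Rightarrow> 'x) \<Rightarrow> 'z::topological_space set \<Rightarrow>
     ('g \<Rightarrow> 'z \<Rightarrow> 'z) \<Rightarrow> ('x \<Rightarrow> 'z) \<Rightarrow> bool" where
  "factor_map_onto \<alpha> Z \<gamma> \<rho> \<longleftrightarrow> group_action_homeo_on Z \<gamma> \<and> continuous_on UNIV \<rho> \<and> \<rho> ` UNIV = Z \<and>
     (\<forall>t x. \<rho> (\<alpha> t x) = \<gamma> t (\<rho> x))"

(* Maximality is tested
   against all equicontinuous factors realised inside the Hilbert cube type
   nat => real (every compact metrisable space embeds there). *)
definition max_equicontinuous_factor :: "('g::group_add \<Rightarrow> 'x::metric_space \<Rightarrow> 'x) \<Rightarrow>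
     ('g \<Rightarrow> 'y::metric_space \<Rightarrow> 'y) \<Rightarrow> ('x \<Rightarrow> 'y) \<Rightarrow> bool" where
  "max_equicontinuous_factor \<alpha> \<beta> \<pi> \<longleftrightarrow>
     factor_map_onto \<alpha> UNIV \<beta> \<pi> \<and> equicontinuous_on UNIV \<beta> \<and>
     (\<forall>(Z::(nat \<Rightarrow> real) set) \<gamma> \<rho>. compact Z \<and> factor_map_onto \<alpha> Z \<gamma> \<rho> \<and> equicontinuous_on Z \<gamma>
        \<longrightarrow> (\<exists>\<phi>. continuous_on UNIV \<phi> \<and> (\<forall>x. \<rho> x = \<phi> (\<pi> x))))"

(* Ellis semigroup: closure of {alpha^t} in X^X with the product (pointwise) topology *)
definition ellis :: "('g \<Rightarrow> 'x \<Rightarrow> 'x::topological_space) \<Rightarrow> ('x \<Rightarrow> 'x) set" where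
  "ellis \<alpha> = closure (range \<alpha>)"

definition two_sided_ideal :: "('x \<Rightarrow> 'x) set \<Rightarrow> ('x \<Rightarrow> 'x) set \<Rightarrow> bool" where
  "two_sided_ideal E I \<longleftrightarrow> I \<noteq> {} \<and> I \<subseteq> E \<and> (\<forall>p\<in>E. \<forall>q\<in>I. p \<circ> q \<in> I \<and> q \<circ> p \<in> I)"

definition kerE :: "('x \<Rightarrow> 'x) set \<Rightarrow> ('x \<Rightarrow> 'x) set" where
  "kerE E = \<Inter>{I. two_sided_ideal E I}"

definition min_idempotents :: "('x \<Rightarrow> 'x) set \<Rightarrow> ('x \<Rightarrow> 'x) set" where
  "min_idempotents E = {p \<in> kerE E. p \<circ> p = p}"

definition structure_group :: "('x \<Rightarrow> 'x) set \<Rightarrow> ('x \<Rightarrow> 'x) \<Rightarrow> ('x \<Rightarrow> 'x) monoid" where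
  "structure_group E e = \<lparr>carrier = {e \<circ> p \<circ> e | p. p \<in> E}, mult = (\<circ>), one = e\<rparr>"

definition little_structure_group :: "('x \<Rightarrow> 'x) set \<Rightarrow> ('x \<Rightarrow> 'x) \<Rightarrow> ('x \<Rightarrow> 'x) set" where
  "little_structure_group E e =
     generate (structure_group E e) {e \<circ> p \<circ> e | p. p \<in> min_idempotents E}"

definition proximal :: "('g \<Rightarrow> 'x \<Rightarrow> 'x::metric_space) \<Rightarrow> 'x \<Rightarrow> 'x \<Rightarrow> bool" where
  "proximal \<alpha> x y \<longleftrightarrow> (INF t. dist (\<alpha> t x) (\<alpha> t y)) = 0"

definition transitive_on :: "'x set \<Rightarrow> ('x \<Rightarrow> 'x \<Rightarrow> bool) \<Rightarrow> bool" where
  "transitive_on A R \<longleftrightarrow> (\<forall>x\<in>A. \<forall>y\<in>A. \<forall>z\<in>A. R x y \<longrightarrow> R y z \<longrightarrow> R x z)"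

end

theory Submission
  imports Defs
begin

lemma compact_imp_closed_fun:
  fixes S :: "('a \<Rightarrow> 'b::metric_space) set"
  assumes "compact S" shows "closed S"
proof -
  have "Hausdorff_space (product_topology (\<lambda>i::'a. euclidean :: 'b topology) UNIV)"
    by (simp add: Hausdorff_space_product_topology)
  then have H: "Hausdorff_space (euclidean :: ('a \<Rightarrow> 'b) topology)"
    by (simp add: euclidean_product_topology)
  have "compactin euclidean S" using assms by simp
  then have "closedin euclidean S" by (rule compactin_imp_closedin[OF H])
  then show ?thesis by simp
qed

lemma compact_UNIV_fun:
  assumes "compact (UNIV :: 'b::topological_space set)"
  shows "compact (UNIV :: ('a \<Rightarrow> 'b) set)"
proof -
  have "compact_space (euclidean :: 'b topology)"
    using assms by (simp add: compact_space_def)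
  then have "compact_space (product_topology (\<lambda>i::'a. euclidean :: 'b topology) UNIV)"
    by (simp add: compact_space_product_topology)
  then have "compact_space (euclidean :: ('a \<Rightarrow> 'b) topology)"
    by (simp add: euclidean_product_topology)
  then show ?thesis
    by (simp add: compact_space_def)
qed

lemma cont_eval: "continuous_on S (\<lambda>f::'a \<Rightarrow> 'b::topological_space. f x)"
  by (rule continuous_on_subset[OF continuous_on_product_coordinates]) simp

lemma cont_rmul: "continuous_on S (\<lambda>p::'a \<Rightarrow> 'b::topological_space. p \<circ> q)"
  by (intro continuous_on_coordinatewise_then_product) (simp add: cont_eval)

lemma cont_lmul:
  assumes "continuous_on UNIV h"
  shows "continuous_on S (\<lambda>p::'a \<Rightarrow> 'b::topological_space. h \<circ> p)"
proof (intro continuous_on_coordinatewise_then_product)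
  fix i
  have "continuous_on S (h \<circ> (\<lambda>p::'a \<Rightarrow> 'b. p i))"
    by (rule continuous_on_compose[OF cont_eval]) (use assms continuous_on_subset in blast)
  then show "continuous_on S (\<lambda>p. (h \<circ> p) i)" by (simp add: o_def)
qed

lemma closed_fix_rmul:
  fixes A :: "('a \<Rightarrow> 'b::metric_space) set"
  assumes "closed A"
  shows "closed {b \<in> A. b \<circ> a = c}"
proof -
  have "closed ((\<lambda>b. b \<circ> a) -` {c})"
    by (rule closed_vimage) (auto simp: cont_rmul compact_imp_closed_fun)
  then have "closed (A \<inter> (\<lambda>b. b \<circ> a) -` {c})" using assms by blast
  moreover have "A \<inter> (\<lambda>b. b \<circ> a) -` {c} = {b \<in> A. b \<circ> a = c}" by auto
  ultimately show ?thesis by simp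
qed

lemma closed_fix_eval:
  fixes A :: "('a \<Rightarrow> 'b::metric_space) set"
  assumes "closed A"
  shows "closed {b \<in> A. b x = y}"
proof -
  have "closed ((\<lambda>b. b x) -` {y})"
    by (rule closed_vimage) (auto simp: cont_eval)
  then have "closed (A \<inter> (\<lambda>b. b x) -` {y})" using assms by blast
  moreover have "A \<inter> (\<lambda>b. b x) -` {y} = {b \<in> A. b x = y}" by auto
  ultimately show ?thesis by simp
qed

lemma finite_chain_Inter:
  assumes "finite F" "\<forall>S\<in>F. \<forall>T\<in>F. S \<subseteq> T \<or> T \<subseteq> S"
  shows "\<Inter>F = UNIV \<or> (\<exists>S\<in>F. \<Inter>F = S)"
  using assms
proof (induction F rule: finite_induct)
  case empty then show ?case by simp
next
  case (insert T F)
  then have "\<Inter>F = UNIV \<or> (\<exists>S\<in>F. \<Inter>F = S)" by blast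
  then show ?case
  proof
    assume "\<Inter>F = UNIV" then show ?thesis by auto
  next
    assume "\<exists>S\<in>F. \<Inter>F = S"
    then obtain S where S: "S \<in> F" "\<Inter>F = S" by blast
    then have "S \<subseteq> T \<or> T \<subseteq> S" using insert.prems by blast
    then show ?thesis
    proof
      assume "S \<subseteq> T"
      then have "\<Inter>(insert T F) = S" using S by auto
      then show ?thesis using S(1) by blast
    next
      assume "T \<subseteq> S"
      then have "\<Inter>(insert T F) = T" using S by auto
      then show ?thesis by blast
    qed
  qed
qed

lemma min_closed_family:
  fixes \<A> :: "'a::topological_space set set"
  assumes K: "compact K" and ne: "\<A> \<noteq> {}"
    and cl: "\<And>S. S \<in> \<A> \<Longrightarrow> closed S \<and> S \<noteq> {} \<and> S \<subseteq> K"
    and ch: "\<And>\<C>. \<C> \<noteq> {} \<Longrightarrow> \<C> \<subseteq> \<A> \<Longrightarrow> (\<forall>S\<in>\<C>. \<forall>T\<in>\<C>. S \<subseteq> T \<or> T \<subseteq> S)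
               \<Longrightarrow> \<Inter>\<C> \<noteq> {} \<Longrightarrow> \<Inter>\<C> \<in> \<A>"
  shows "\<exists>M\<in>\<A>. \<forall>S\<in>\<A>. S \<subseteq> M \<longrightarrow> S = M"
proof -
  define \<B> where "\<B> = uminus ` \<A>"
  have "\<exists>M\<in>\<B>. \<forall>X\<in>\<B>. M \<subseteq> X \<longrightarrow> X = M"
  proof (rule subset_Zorn_nonempty)
    show "\<B> \<noteq> {}" using ne by (simp add: \<B>_def)
  next
    fix \<C> assume C: "\<C> \<noteq> {}" "subset.chain \<B> \<C>"
    define \<D> where "\<D> = uminus ` \<C>"
    have D1: "\<D> \<noteq> {}" using C by (simp add: \<D>_def)
    have D2: "\<D> \<subseteq> \<A>" using C unfolding \<D>_def \<B>_def subset.chain_def by auto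
    have D3: "\<forall>S\<in>\<D>. \<forall>T\<in>\<D>. S \<subseteq> T \<or> T \<subseteq> S"
      using C unfolding \<D>_def subset.chain_def by auto
    have "K \<inter> \<Inter>\<D> \<noteq> {}"
    proof (rule compact_imp_fip[OF K])
      show "closed T" if "T \<in> \<D>" for T using cl D2 that by blast
    next
      fix F' assume F': "finite F'" "F' \<subseteq> \<D>"
      have "\<Inter>F' = UNIV \<or> (\<exists>S\<in>F'. \<Inter>F' = S)"
        using finite_chain_Inter[OF F'(1)] D3 F'(2) by blast
      then show "K \<inter> \<Inter>F' \<noteq> {}"
      proof
        assume "\<Inter>F' = UNIV"
        obtain S where "S \<in> \<D>" using D1 by blast
        then have "S \<subseteq> K" "S \<noteq> {}" using cl D2 by blast+
        then show ?thesis using \<open>\<Inter>F' = UNIV\<close> by (metis Int_UNIV_right subset_empty)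
      next
        assume "\<exists>S\<in>F'. \<Inter>F' = S"
        then obtain S where "S \<in> F'" "\<Inter>F' = S" by blast
        then have "S \<subseteq> K" "S \<noteq> {}" using cl D2 F' by blast+
        then show ?thesis using \<open>\<Inter>F' = S\<close> by (metis inf.absorb_iff2)
      qed
    qed
    then have "\<Inter>\<D> \<in> \<A>" using ch[OF D1 D2 D3] by blast
    moreover have "\<Union>\<C> = - \<Inter>\<D>" by (auto simp: \<D>_def)
    ultimately show "\<Union>\<C> \<in> \<B>" by (simp add: \<B>_def)
  qed
  then obtain M where M: "M \<in> \<B>" "\<forall>X\<in>\<B>. M \<subseteq> X \<longrightarrow> X = M" by blast
  show ?thesis
  proof (intro bexI[of _ "- M"] ballI impI)
    show "- M \<in> \<A>" using M(1) by (auto simp: \<B>_def)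
  next
    fix S assume "S \<in> \<A>" "S \<subseteq> - M"
    then have "- S \<in> \<B>" "M \<subseteq> - S" by (auto simp: \<B>_def)
    then have "- S = M" using M(2) by blast
    then show "S = - M" by auto
  qed
qed



locale ellis_sys =
  fixes \<alpha> :: "'g::group_add \<Rightarrow> 'x::metric_space \<Rightarrow> 'x"
  assumes cpt: "compact (UNIV :: 'x set)"
    and act: "group_action_homeo \<alpha>"
    and mini: "minimal_system \<alpha>"
begin

abbreviation "E \<equiv> ellis \<alpha>"

lemma alpha_cont: "continuous_on UNIV (\<alpha> t)"
  using act by (simp add: group_action_homeo_def)

lemma alpha_comp: "\<alpha> t \<circ> \<alpha> s = \<alpha> (t + s)"
  using act by (simp add: group_action_homeo_def)

lemma alpha_in_E: "\<alpha> t \<in> E"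
proof -
  have "\<alpha> t \<in> range \<alpha>" by simp
  then show ?thesis unfolding ellis_def by (rule subsetD[OF closure_subset])
qed

lemma E_closed: "closed E"
  by (simp add: ellis_def)

lemma E_compact: "compact E"
proof -
  have "compact (UNIV :: ('x \<Rightarrow> 'x) set)" by (rule compact_UNIV_fun[OF cpt])
  then show ?thesis using E_closed closed_Int_compact[of E UNIV] by simp
qed

lemma lmul_E:
  assumes "q \<in> E" shows "\<alpha> t \<circ> q \<in> E"
proof -
  have "(\<lambda>p. \<alpha> t \<circ> p) ` closure (range \<alpha>) \<subseteq> E"
  proof (rule image_closure_subset)
    show "continuous_on (closure (range \<alpha>)) (\<lambda>p. \<alpha> t \<circ> p)"
      using cont_lmul[OF alpha_cont] by blast
    show "closed E" by (rule E_closed)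
    show "(\<lambda>p. \<alpha> t \<circ> p) ` range \<alpha> \<subseteq> E"
      using alpha_comp alpha_in_E by auto
  qed
  then show ?thesis using assms by (auto simp: ellis_def)
qed

lemma mult_E:
  assumes "p \<in> E" "q \<in> E" shows "p \<circ> q \<in> E"
proof -
  have "(\<lambda>p. p \<circ> q) ` closure (range \<alpha>) \<subseteq> E"
  proof (rule image_closure_subset)
    show "continuous_on (closure (range \<alpha>)) (\<lambda>p. p \<circ> q)"
      by (rule cont_rmul)
    show "closed E" by (rule E_closed)
    show "(\<lambda>p. p \<circ> q) ` range \<alpha> \<subseteq> E"
      using lmul_E[OF assms(2)] by auto
  qed
  then show ?thesis using assms by (auto simp: ellis_def)
qed

lemma E_ne: "E \<noteq> {}" using alpha_in_E by blast

lemma E_ideal: "two_sided_ideal E E"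
  using E_ne mult_E by (auto simp: two_sided_ideal_def)

lemma kerE_sub: "kerE E \<subseteq> E"
  using E_ideal unfolding kerE_def by blast

lemma ker_rmul:
  assumes "u \<in> kerE E" "p \<in> E" shows "u \<circ> p \<in> kerE E"
  using assms unfolding kerE_def two_sided_ideal_def by blast

lemma ker_lmul:
  assumes "u \<in> kerE E" "p \<in> E" shows "p \<circ> u \<in> kerE E"
  using assms unfolding kerE_def two_sided_ideal_def by blast

definition leftI :: "('x \<Rightarrow> 'x) set \<Rightarrow> bool" where
  "leftI S \<longleftrightarrow> S \<noteq> {} \<and> S \<subseteq> E \<and> (\<forall>p\<in>E. \<forall>l\<in>S. p \<circ> l \<in> S)"

definition minL :: "('x \<Rightarrow> 'x) set \<Rightarrow> bool" where
  "minL L \<longleftrightarrow> leftI L \<and> (\<forall>T. leftI T \<and> T \<subseteq> L \<longrightarrow> T = L)"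

lemma Eq_compact: "compact ((\<lambda>p. p \<circ> q) ` E)"
  by (rule compact_continuous_image[OF cont_rmul E_compact])

lemma Eq_closed: "closed ((\<lambda>p. p \<circ> q) ` E)"
  by (rule compact_imp_closed_fun[OF Eq_compact])

lemma Eq_leftI: assumes "q \<in> E" shows "leftI ((\<lambda>p. p \<circ> q) ` E)"
  unfolding leftI_def
proof (intro conjI ballI)
  show "(\<lambda>p. p \<circ> q) ` E \<noteq> {}" using E_ne by blast
  show "(\<lambda>p. p \<circ> q) ` E \<subseteq> E" using mult_E assms by blast
  fix p l assume "p \<in> E" "l \<in> (\<lambda>p. p \<circ> q) ` E"
  then obtain r where "r \<in> E" "l = r \<circ> q" by blast
  then show "p \<circ> l \<in> (\<lambda>p. p \<circ> q) ` E"
    using mult_E[OF \<open>p \<in> E\<close> \<open>r \<in> E\<close>] by (auto simp: o_assoc)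
qed

lemma minL_gen:
  assumes "minL L" "r \<in> L" shows "(\<lambda>p. p \<circ> r) ` E = L"
proof -
  have rE: "r \<in> E" using assms unfolding minL_def leftI_def by blast
  have "(\<lambda>p. p \<circ> r) ` E \<subseteq> L" using assms unfolding minL_def leftI_def by blast
  then show ?thesis using assms Eq_leftI[OF rE] unfolding minL_def by blast
qed

lemma leftI_E: "leftI E"
  unfolding leftI_def using E_ne mult_E by blast

lemma leftI_Inter:
  assumes "\<C> \<noteq> {}" "\<And>S. S \<in> \<C> \<Longrightarrow> leftI S" "\<Inter>\<C> \<noteq> {}"
  shows "leftI (\<Inter>\<C>)"
proof -
  obtain S0 where S0: "S0 \<in> \<C>" using assms(1) by blast
  have "\<Inter>\<C> \<subseteq> E"
  proof -
    have "\<Inter>\<C> \<subseteq> S0" using S0 by (rule Inter_lower)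
    moreover have "S0 \<subseteq> E" using assms(2)[OF S0] unfolding leftI_def by simp
    ultimately show ?thesis by (rule order_trans)
  qed
  moreover have "\<forall>p\<in>E. \<forall>l\<in>\<Inter>\<C>. p \<circ> l \<in> \<Inter>\<C>"
  proof (intro ballI InterI)
    fix p l S assume "p \<in> E" "l \<in> \<Inter>\<C>" "S \<in> \<C>"
    then have "l \<in> S" by blast
    then show "p \<circ> l \<in> S" using assms(2)[OF \<open>S \<in> \<C>\<close>] \<open>p \<in> E\<close> unfolding leftI_def by blast
  qed
  ultimately show ?thesis using assms(3) unfolding leftI_def by blast
qed

lemma exists_minL: "\<exists>L. minL L"
proof -
  define \<A> where "\<A> = {S. leftI S \<and> closed S}"
  have "\<exists>M\<in>\<A>. \<forall>S\<in>\<A>. S \<subseteq> M \<longrightarrow> S = M"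
  proof (rule min_closed_family[OF E_compact])
    have "E \<in> \<A>" using leftI_E E_closed by (simp add: \<A>_def)
    then show "\<A> \<noteq> {}" by blast
    show "\<And>S. S \<in> \<A> \<Longrightarrow> closed S \<and> S \<noteq> {} \<and> S \<subseteq> E"
      unfolding \<A>_def leftI_def by simp
    fix \<C> assume C: "\<C> \<noteq> {}" "\<C> \<subseteq> \<A>" "\<Inter>\<C> \<noteq> {}"
    have "leftI (\<Inter>\<C>)" using C by (intro leftI_Inter) (auto simp: \<A>_def)
    moreover have "closed (\<Inter>\<C>)" using C unfolding \<A>_def by (intro closed_Inter) auto
    ultimately show "\<Inter>\<C> \<in> \<A>" by (simp add: \<A>_def)
  qed
  then obtain M where M: "M \<in> \<A>" "\<forall>S\<in>\<A>. S \<subseteq> M \<longrightarrow> S = M" by blast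
  have "minL M" unfolding minL_def
  proof (intro conjI allI impI)
    show "leftI M" using M(1) by (simp add: \<A>_def)
    fix T assume T: "leftI T \<and> T \<subseteq> M"
    then obtain q where q: "q \<in> T" unfolding leftI_def by blast
    then have qE: "q \<in> E" using T unfolding leftI_def by blast
    have sub: "(\<lambda>p. p \<circ> q) ` E \<subseteq> T" using T q unfolding leftI_def by blast
    have "(\<lambda>p. p \<circ> q) ` E \<in> \<A>" using Eq_leftI[OF qE] Eq_closed by (simp add: \<A>_def)
    then have "(\<lambda>p. p \<circ> q) ` E = M" using M(2) sub T by blast
    then show "T = M" using sub T by blast
  qed
  then show ?thesis by blast
qed

lemma minL_rmul:
  assumes L: "minL L" and q: "q \<in> E" shows "minL ((\<lambda>l. l \<circ> q) ` L)"
proof -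
  have LE: "L \<subseteq> E" and Lne: "L \<noteq> {}" and Ll: "\<forall>p\<in>E. \<forall>l\<in>L. p \<circ> l \<in> L"
    using L unfolding minL_def leftI_def by auto
  have lI: "leftI ((\<lambda>l. l \<circ> q) ` L)" unfolding leftI_def
  proof (intro conjI ballI)
    show "(\<lambda>l. l \<circ> q) ` L \<noteq> {}" using Lne by blast
    show "(\<lambda>l. l \<circ> q) ` L \<subseteq> E" using LE q mult_E by blast
    fix p l assume "p \<in> E" "l \<in> (\<lambda>l. l \<circ> q) ` L"
    then obtain r where "r \<in> L" "l = r \<circ> q" by blast
    then show "p \<circ> l \<in> (\<lambda>l. l \<circ> q) ` L"
      using Ll \<open>p \<in> E\<close> by (auto simp: o_assoc)
  qed
  show ?thesis unfolding minL_def
  proof (intro conjI allI impI lI)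
    fix T assume T: "leftI T \<and> T \<subseteq> (\<lambda>l. l \<circ> q) ` L"
    define L' where "L' = {l \<in> L. l \<circ> q \<in> T}"
    have "leftI L'" unfolding leftI_def
    proof (intro conjI ballI)
      obtain j where "j \<in> T" using T unfolding leftI_def by blast
      then show "L' \<noteq> {}" using T unfolding L'_def by blast
      show "L' \<subseteq> E" using LE unfolding L'_def by blast
      fix p l assume "p \<in> E" "l \<in> L'"
      then have "l \<in> L" "l \<circ> q \<in> T" unfolding L'_def by auto
      then have "p \<circ> l \<in> L" "p \<circ> (l \<circ> q) \<in> T" using Ll T \<open>p \<in> E\<close> unfolding leftI_def by auto
      then show "p \<circ> l \<in> L'" unfolding L'_def by (simp add: o_assoc)
    qed
    then have "L' = L" using L unfolding minL_def L'_def by blast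
    then show "T = (\<lambda>l. l \<circ> q) ` L" using T unfolding L'_def by blast
  qed
qed

lemma minL_e:
  assumes e: "e \<in> kerE E" shows "minL ((\<lambda>p. p \<circ> e) ` E)"
proof -
  obtain L0 where L0: "minL L0" using exists_minL by blast
  have L0E: "L0 \<subseteq> E" and L0ne: "L0 \<noteq> {}" and Ll: "\<forall>p\<in>E. \<forall>l\<in>L0. p \<circ> l \<in> L0"
    using L0 unfolding minL_def leftI_def by auto
  define I where "I = {l \<circ> q | l q. l \<in> L0 \<and> q \<in> E}"
  have "two_sided_ideal E I" unfolding two_sided_ideal_def
  proof (intro conjI ballI)
    show "I \<noteq> {}" using L0ne E_ne unfolding I_def by blast
    show "I \<subseteq> E" using L0E mult_E unfolding I_def by blast
    fix p i assume "p \<in> E" "i \<in> I"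
    then obtain l q where lq: "l \<in> L0" "q \<in> E" "i = l \<circ> q" unfolding I_def by blast
    have "p \<circ> i = (p \<circ> l) \<circ> q" "p \<circ> l \<in> L0" using lq Ll \<open>p \<in> E\<close> by (auto simp: o_assoc)
    then show "p \<circ> i \<in> I" unfolding I_def using lq(2) by blast
    have "i \<circ> p = l \<circ> (q \<circ> p)" "q \<circ> p \<in> E" using lq mult_E \<open>p \<in> E\<close> by (auto simp: o_assoc)
    then show "i \<circ> p \<in> I" unfolding I_def using lq(1) by blast
  qed
  then have "e \<in> I" using e unfolding kerE_def by blast
  then obtain l q where lq: "l \<in> L0" "q \<in> E" "e = l \<circ> q" unfolding I_def by blast
  have eE: "e \<in> E" using e kerE_sub by blast
  have sub: "(\<lambda>p. p \<circ> e) ` E \<subseteq> (\<lambda>l. l \<circ> q) ` L0"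
  proof
    fix x assume "x \<in> (\<lambda>p. p \<circ> e) ` E"
    then obtain p where "p \<in> E" "x = p \<circ> e" by blast
    then have "x = (p \<circ> l) \<circ> q" "p \<circ> l \<in> L0" using lq Ll by (auto simp: o_assoc)
    then show "x \<in> (\<lambda>l. l \<circ> q) ` L0" by blast
  qed
  have m: "minL ((\<lambda>l. l \<circ> q) ` L0)" by (rule minL_rmul[OF L0 lq(2)])
  then have "(\<lambda>p. p \<circ> e) ` E = (\<lambda>l. l \<circ> q) ` L0"
    using sub Eq_leftI[OF eE] unfolding minL_def by blast
  then show ?thesis using m by simp
qed

lemma ellis_numakura:
  assumes S: "S \<subseteq> E" "closed S" "S \<noteq> {}" "\<forall>a\<in>S. \<forall>b\<in>S. a \<circ> b \<in> S"
  shows "\<exists>v\<in>S. v \<circ> v = v"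
proof -
  define \<A> where "\<A> = {A. A \<subseteq> S \<and> closed A \<and> A \<noteq> {} \<and> (\<forall>a\<in>A. \<forall>b\<in>A. a \<circ> b \<in> A)}"
  have "\<exists>M\<in>\<A>. \<forall>B\<in>\<A>. B \<subseteq> M \<longrightarrow> B = M"
  proof (rule min_closed_family[OF E_compact])
    show "\<A> \<noteq> {}" using S unfolding \<A>_def by blast
    show "\<And>A. A \<in> \<A> \<Longrightarrow> closed A \<and> A \<noteq> {} \<and> A \<subseteq> E"
      using S unfolding \<A>_def by blast
    fix \<C> assume C: "\<C> \<noteq> {}" "\<C> \<subseteq> \<A>" "\<Inter>\<C> \<noteq> {}"
    then show "\<Inter>\<C> \<in> \<A>" unfolding \<A>_def by blast
  qed
  then obtain A where A: "A \<in> \<A>" "\<forall>B\<in>\<A>. B \<subseteq> A \<longrightarrow> B = A" by blast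
  have AS: "A \<subseteq> S" "closed A" "A \<noteq> {}" "\<forall>a\<in>A. \<forall>b\<in>A. a \<circ> b \<in> A"
    using A(1) unfolding \<A>_def by auto
  obtain a where a: "a \<in> A" using AS by blast
  have AE: "A \<subseteq> E" using AS(1) S(1) by blast
  have cA: "compact A"
  proof -
    have "compact (E \<inter> A)" by (rule compact_Int_closed[OF E_compact AS(2)])
    moreover have "E \<inter> A = A" using AE by blast
    ultimately show ?thesis by simp
  qed
  have "(\<lambda>b. b \<circ> a) ` A \<in> \<A>" unfolding \<A>_def
  proof (intro CollectI conjI ballI)
    show "(\<lambda>b. b \<circ> a) ` A \<subseteq> S" using AS a by blast
    show "closed ((\<lambda>b. b \<circ> a) ` A)"
      by (rule compact_imp_closed_fun[OF compact_continuous_image[OF cont_rmul cA]])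
    show "(\<lambda>b. b \<circ> a) ` A \<noteq> {}" using a by blast
    fix x y assume "x \<in> (\<lambda>b. b \<circ> a) ` A" "y \<in> (\<lambda>b. b \<circ> a) ` A"
    then obtain b c where "b \<in> A" "c \<in> A" "x = b \<circ> a" "y = c \<circ> a" by blast
    then show "x \<circ> y \<in> (\<lambda>b. b \<circ> a) ` A"
      using AS(4) a by (auto simp: o_assoc intro!: image_eqI[of _ _ "b \<circ> a \<circ> c"])
  qed
  moreover have "(\<lambda>b. b \<circ> a) ` A \<subseteq> A" using AS a by blast
  ultimately have eqA: "(\<lambda>b. b \<circ> a) ` A = A" using A(2) by blast
  define B where "B = {b \<in> A. b \<circ> a = a}"
  have "B \<in> \<A>" unfolding \<A>_def
  proof (intro CollectI conjI ballI)
    show "B \<subseteq> S" using AS unfolding B_def by blast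
    show "closed B" unfolding B_def by (rule closed_fix_rmul[OF AS(2)])
    have "a \<in> (\<lambda>b. b \<circ> a) ` A" using eqA a by (rule ssubst)
    then obtain b where hb: "a = b \<circ> a" "b \<in> A" by (rule imageE)
    have "b \<in> B" unfolding B_def using hb(2) hb(1)[symmetric] by simp
    then show "B \<noteq> {}" by blast
    fix x y assume "x \<in> B" "y \<in> B"
    then show "x \<circ> y \<in> B" using AS(4) unfolding B_def by (auto simp: comp_assoc)
  qed
  moreover have "B \<subseteq> A" unfolding B_def by blast
  ultimately have "B = A" using A(2) by blast
  then have "a \<in> B" using a by simp
  then have aa: "a \<circ> a = a" unfolding B_def by simp
  have "a \<in> S" using a AS(1) by blast
  show ?thesis by (rule bexI[where P="\<lambda>v. v \<circ> v = v" and x=a, OF aa \<open>a \<in> S\<close>])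
qed

lemma minL_orbit:
  assumes L: "minL L" shows "(\<lambda>p. p x) ` L = UNIV"
proof -
  obtain r where r: "r \<in> L" using L unfolding minL_def leftI_def by blast
  have LE: "L = (\<lambda>p. p \<circ> r) ` E" using minL_gen[OF L r] by simp
  have "compact L" using LE Eq_compact by simp
  then have "compact ((\<lambda>p. p x) ` L)" by (rule compact_continuous_image[OF cont_eval])
  then have cl: "closed ((\<lambda>p. p x) ` L)" by (rule compact_imp_closed)
  obtain y where y: "y \<in> (\<lambda>p. p x) ` L" using r by blast
  then obtain p where p: "p \<in> L" "y = p x" by blast
  have "range (\<lambda>t. \<alpha> t y) \<subseteq> (\<lambda>p. p x) ` L"
  proof
    fix z assume "z \<in> range (\<lambda>t. \<alpha> t y)"
    then obtain t where "z = \<alpha> t y" by blast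
    then have "z = (\<alpha> t \<circ> p) x" "\<alpha> t \<circ> p \<in> L"
      using p L alpha_in_E unfolding minL_def leftI_def by auto
    then show "z \<in> (\<lambda>p. p x) ` L" by blast
  qed
  then have "closure (range (\<lambda>t. \<alpha> t y)) \<subseteq> (\<lambda>p. p x) ` L"
    by (rule closure_minimal[OF _ cl])
  then show ?thesis using mini unfolding minimal_system_def by auto
qed

lemma prox_imp:
  assumes "proximal \<alpha> x y" shows "\<exists>p\<in>E. p x = p y"
proof -
  let ?f = "\<lambda>t. dist (\<alpha> t x) (\<alpha> t y)"
  have bdd: "bdd_below (range ?f)" by (auto intro: bdd_belowI[of _ 0])
  have small: "\<exists>t. ?f t < \<epsilon>" if "\<epsilon> > 0" for \<epsilon>
  proof -
    have "(INF t. ?f t) < \<epsilon>" using assms that unfolding proximal_def by simp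
    then show ?thesis using cINF_less_iff[OF _ bdd] by auto
  qed
  define C where "C = (\<lambda>\<epsilon>::real. {p::'x\<Rightarrow>'x. dist (p x) (p y) \<le> \<epsilon>})"
  have "E \<inter> \<Inter> (C ` {\<epsilon>. \<epsilon> > 0}) \<noteq> {}"
  proof (rule compact_imp_fip_image[OF E_compact])
    fix i show "closed (C i)" unfolding C_def
    proof -
      have "closed ((\<lambda>p::'x\<Rightarrow>'x. dist (p x) (p y)) -` {..i})"
        by (rule closed_vimage) (auto intro!: continuous_on_dist cont_eval)
      moreover have "(\<lambda>p::'x\<Rightarrow>'x. dist (p x) (p y)) -` {..i} = {p::'x\<Rightarrow>'x. dist (p x) (p y) \<le> i}" by auto
      ultimately show "closed {p::'x\<Rightarrow>'x. dist (p x) (p y) \<le> i}" by simp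
    qed
  next
    fix I' assume I': "finite I'" "I' \<subseteq> {\<epsilon>::real. \<epsilon> > 0}"
    show "E \<inter> \<Inter> (C ` I') \<noteq> {}"
    proof (cases "I' = {}")
      case True then show ?thesis using E_ne by simp
    next
      case False
      have "Min I' > 0" using I' False by auto
      then obtain t where t: "?f t < Min I'" using small by blast
      have "\<alpha> t \<in> C i" if "i \<in> I'" for i
        using t Min_le[OF I'(1) that] unfolding C_def by auto
      then show ?thesis using alpha_in_E by blast
    qed
  qed
  then obtain p where p: "p \<in> E" "\<And>\<epsilon>. \<epsilon> > 0 \<Longrightarrow> dist (p x) (p y) \<le> \<epsilon>"
    unfolding C_def by blast
  have "dist (p x) (p y) \<le> 0"
  proof (rule ccontr)
    assume "\<not> dist (p x) (p y) \<le> 0"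
    then have pos: "dist (p x) (p y) > 0" by simp
    then have "dist (p x) (p y) \<le> dist (p x) (p y) / 2" using p(2)[of "dist (p x) (p y) / 2"] by simp
    then show False using pos by simp
  qed
  then have "p x = p y" by simp
  then show ?thesis using p by blast
qed

lemma imp_prox:
  assumes p: "p \<in> E" "p x = p y" shows "proximal \<alpha> x y"
proof -
  let ?f = "\<lambda>t. dist (\<alpha> t x) (\<alpha> t y)"
  have bdd: "bdd_below (range ?f)" by (auto intro: bdd_belowI[of _ 0])
  have ge: "(INF t. ?f t) \<ge> 0" by (rule cINF_greatest) auto
  have le: "(INF t. ?f t) \<le> \<epsilon>" if "\<epsilon> > 0" for \<epsilon>
  proof -
    define U where "U = (\<lambda>q::'x\<Rightarrow>'x. dist (q x) (q y)) -` {..<\<epsilon>}"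
    have "open U" unfolding U_def
      by (rule open_vimage) (auto intro!: continuous_on_dist cont_eval)
    moreover have "p \<in> U \<inter> closure (range \<alpha>)"
      using p that unfolding U_def ellis_def by auto
    ultimately have "U \<inter> range \<alpha> \<noteq> {}" using open_Int_closure_eq_empty by blast
    then obtain t where "?f t < \<epsilon>" unfolding U_def by auto
    moreover have "(INF t. ?f t) \<le> ?f t" by (rule cINF_lower[OF bdd]) simp
    ultimately show ?thesis by simp
  qed
  have "(INF t. ?f t) \<le> 0"
  proof (rule ccontr)
    assume "\<not> (INF t. ?f t) \<le> 0"
    then have pos: "(INF t. ?f t) > 0" by simp
    then have "(INF t. ?f t) \<le> (INF t. ?f t) / 2" using le[of "(INF t. ?f t) / 2"] by simp
    then show False using pos by simp
  qed
  then show ?thesis using ge unfolding proximal_def by simp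
qed

lemma prox_iff: "proximal \<alpha> x y \<longleftrightarrow> (\<exists>p\<in>E. p x = p y)"
  using prox_imp imp_prox by blast

end


locale ellis_min = ellis_sys \<alpha> for \<alpha> :: "'g::group_add \<Rightarrow> 'x::metric_space \<Rightarrow> 'x" +
  fixes e :: "'x \<Rightarrow> 'x"
  assumes e_min: "e \<in> min_idempotents (ellis \<alpha>)"
begin

abbreviation "G \<equiv> structure_group E e"
abbreviation "gens \<equiv> {e \<circ> p \<circ> e | p. p \<in> min_idempotents E}"

lemma eK: "e \<in> kerE E" using e_min by (simp add: min_idempotents_def)
lemma eE: "e \<in> E" using eK kerE_sub by blast
lemma ee: "e \<circ> e = e" using e_min by (simp add: min_idempotents_def)
lemma ee': "e (e z) = e z" using ee by (metis comp_apply)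

lemma L_min: "minL ((\<lambda>p. p \<circ> e) ` E)" by (rule minL_e[OF eK])

lemma carrier_iff: "g \<in> carrier G \<longleftrightarrow> g \<in> E \<and> e \<circ> g = g \<and> g \<circ> e = g"
proof
  assume "g \<in> carrier G"
  then obtain p where p: "p \<in> E" "g = e \<circ> p \<circ> e" by (auto simp: structure_group_def)
  have "g \<in> E" using p mult_E eE by simp
  moreover have "e \<circ> g = g" using p ee by (simp add: comp_assoc[symmetric])
  moreover have "g \<circ> e = g" using p ee by (simp add: comp_assoc)
  ultimately show "g \<in> E \<and> e \<circ> g = g \<and> g \<circ> e = g" by blast
next
  assume h: "g \<in> E \<and> e \<circ> g = g \<and> g \<circ> e = g"
  then have "g = e \<circ> g \<circ> e" by simp
  then have "g = e \<circ> g \<circ> e \<and> g \<in> E" using h by blast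
  then have "\<exists>p. g = e \<circ> p \<circ> e \<and> p \<in> E"
    by (rule exI[where P="\<lambda>p. g = e \<circ> p \<circ> e \<and> p \<in> E" and x=g])
  then show "g \<in> carrier G" by (simp add: structure_group_def)
qed

lemma left_inv_L:
  assumes "d \<in> E" "d \<circ> e = d" shows "\<exists>q\<in>E. q \<circ> d = e"
proof -
  have "d \<in> (\<lambda>p. p \<circ> e) ` E" using assms by (metis image_eqI)
  then have "(\<lambda>p. p \<circ> d) ` E = (\<lambda>p. p \<circ> e) ` E" by (rule minL_gen[OF L_min])
  moreover have "e \<in> (\<lambda>p. p \<circ> e) ` E" using eE ee by (metis image_eqI)
  ultimately have "e \<in> (\<lambda>p. p \<circ> d) ` E" by simp
  then obtain q where "e = q \<circ> d" "q \<in> E" by (rule imageE)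
  then show ?thesis by auto
qed

lemma G_group: "group G"
proof (rule groupI)
  fix x y assume "x \<in> carrier G" "y \<in> carrier G"
  then have xy: "x \<in> E" "e \<circ> x = x" "x \<circ> e = x" "y \<in> E" "e \<circ> y = y" "y \<circ> e = y"
    using carrier_iff by auto
  have "x \<circ> y \<in> E" using xy mult_E by simp
  moreover have "e \<circ> (x \<circ> y) = x \<circ> y" using xy(2) by (simp add: comp_assoc[symmetric])
  moreover have "(x \<circ> y) \<circ> e = x \<circ> y" using xy(6) by (simp add: comp_assoc)
  ultimately have "x \<circ> y \<in> carrier G" using carrier_iff by blast
  then show "x \<otimes>\<^bsub>G\<^esub> y \<in> carrier G" by (simp add: structure_group_def)
next
  have "e \<in> carrier G" using eE ee carrier_iff by blast
  then show "\<one>\<^bsub>G\<^esub> \<in> carrier G" by (simp add: structure_group_def)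
next
  fix x y z assume "x \<in> carrier G" "y \<in> carrier G" "z \<in> carrier G"
  then show "x \<otimes>\<^bsub>G\<^esub> y \<otimes>\<^bsub>G\<^esub> z = x \<otimes>\<^bsub>G\<^esub> (y \<otimes>\<^bsub>G\<^esub> z)"
    by (simp add: structure_group_def comp_assoc)
next
  fix x assume "x \<in> carrier G"
  then show "\<one>\<^bsub>G\<^esub> \<otimes>\<^bsub>G\<^esub> x = x" using carrier_iff by (simp add: structure_group_def)
next
  fix x assume x: "x \<in> carrier G"
  then have xp: "x \<in> E" "e \<circ> x = x" "x \<circ> e = x" using carrier_iff by auto
  then obtain q where q: "q \<in> E" "q \<circ> x = e" using left_inv_L by blast
  have "e \<circ> q \<circ> e \<in> carrier G" using q eE by (auto simp: structure_group_def)
  moreover have "(e \<circ> q \<circ> e) \<circ> x = e"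
  proof -
    have "(e \<circ> q \<circ> e) \<circ> x = e \<circ> (q \<circ> (e \<circ> x))" by (simp add: comp_assoc)
    also have "\<dots> = e \<circ> e" using xp q by simp
    finally show ?thesis using ee by simp
  qed
  ultimately show "\<exists>y\<in>carrier G. y \<otimes>\<^bsub>G\<^esub> x = \<one>\<^bsub>G\<^esub>"
    by (auto simp: structure_group_def)
qed

lemma G_mult [simp]: "x \<otimes>\<^bsub>G\<^esub> y = x \<circ> y" by (simp add: structure_group_def)
lemma G_one [simp]: "\<one>\<^bsub>G\<^esub> = e" by (simp add: structure_group_def)

lemma inv_props:
  assumes "c \<in> carrier G"
  shows "inv\<^bsub>G\<^esub> c \<in> carrier G" "inv\<^bsub>G\<^esub> c \<circ> c = e" "c \<circ> inv\<^bsub>G\<^esub> c = e"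
  using group.l_inv[OF G_group assms] group.r_inv[OF G_group assms]
    group.inv_closed[OF G_group assms] by auto

lemma gens_sub: "gens \<subseteq> carrier G"
proof
  fix g assume "g \<in> gens"
  then obtain u where u: "u \<in> min_idempotents E" "g = e \<circ> u \<circ> e" by blast
  then have "u \<in> E" using kerE_sub by (auto simp: min_idempotents_def)
  then show "g \<in> carrier G" using u by (auto simp: structure_group_def)
qed

lemma Gamma_sub: "little_structure_group E e \<subseteq> carrier G"
  unfolding little_structure_group_def by (rule group.generate_incl[OF G_group gens_sub])

lemma fixv:
  "\<exists>v. v \<in> kerE E \<and> v \<in> E \<and> v \<circ> v = v \<and> v x = x \<and> v \<circ> e = v \<and> e \<circ> v = e"
proof -
  let ?L = "(\<lambda>p. p \<circ> e) ` E"
  define S where "S = {q \<in> ?L. q x = x}"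
  have LE: "?L \<subseteq> E" using eE mult_E by blast
  have Sc: "closed S" unfolding S_def by (rule closed_fix_eval[OF Eq_closed])
  have "x \<in> (\<lambda>p. p x) ` ?L" using minL_orbit[OF L_min] by simp
  then obtain q where hq: "x = q x" "q \<in> ?L" by (rule imageE)
  have "q \<in> S" unfolding S_def using hq(2) hq(1)[symmetric] by blast
  then have Sne: "S \<noteq> {}" by blast
  have Ssg: "\<forall>a\<in>S. \<forall>b\<in>S. a \<circ> b \<in> S"
  proof (intro ballI)
    fix a b assume "a \<in> S" "b \<in> S"
    then have "a \<in> E" "b \<in> ?L" "a x = x" "b x = x" using LE unfolding S_def by auto
    moreover have "a \<circ> b \<in> ?L" using L_min \<open>a \<in> E\<close> \<open>b \<in> ?L\<close> unfolding minL_def leftI_def by blast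
    ultimately show "a \<circ> b \<in> S" unfolding S_def by simp
  qed
  obtain v where v: "v \<in> S" "v \<circ> v = v"
    using ellis_numakura[of S] Sc Sne Ssg LE unfolding S_def by blast
  then obtain p where p: "p \<in> E" "v = p \<circ> e" "v x = x" unfolding S_def by blast
  have vE: "v \<in> E" using p mult_E eE by simp
  have vK: "v \<in> kerE E" using p ker_lmul[OF eK] by simp
  have ve: "v \<circ> e = v" using p ee by (simp add: comp_assoc)
  have "v \<in> ?L" using v unfolding S_def by blast
  then have "(\<lambda>p. p \<circ> v) ` E = ?L" by (rule minL_gen[OF L_min])
  moreover have "e \<in> ?L" using eE ee by (metis image_eqI)
  ultimately have "e \<in> (\<lambda>p. p \<circ> v) ` E" by simp
  then obtain r where r: "e = r \<circ> v" "r \<in> E" by (rule imageE)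
  have "e \<circ> v = r \<circ> (v \<circ> v)" using r(1) by (simp add: comp_assoc)
  then have ev: "e \<circ> v = e" using v(2) r(1) by simp
  show ?thesis using vK vE v(2) p(3) ve ev by blast
qed

lemma fixed_prox_eq:
  assumes "e x = x" "e y = y" "p \<in> E" "p x = p y" shows "x = y"
proof -
  let ?d = "e \<circ> p \<circ> e"
  have d: "?d \<in> carrier G" using assms(3) by (auto simp: structure_group_def)
  let ?g = "inv\<^bsub>G\<^esub> ?d"
  have gd: "?g \<circ> ?d = e" using inv_props[OF d] by simp
  have "?d x = ?d y" using assms by simp
  then have "?g (?d x) = ?g (?d y)" by simp
  then have "(?g \<circ> ?d) x = (?g \<circ> ?d) y" by simp
  then have "e x = e y" using gd by simp
  then show ?thesis using assms by simp
qed

lemma gen_fix: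
  assumes "\<And>h. h \<in> gens \<Longrightarrow> h z = z" "e z = z" "\<gamma> \<in> little_structure_group E e"
  shows "\<gamma> z = z"
  using assms(3) unfolding little_structure_group_def
proof (induction rule: generate.induct)
  case one then show ?case using assms(2) by simp
next
  case (incl h) then show ?case using assms(1) by blast
next
  case (inv h)
  then have hc: "h \<in> carrier G" using gens_sub by blast
  have "h z = z" using assms(1) inv by blast
  then have "(inv\<^bsub>G\<^esub> h) z = (inv\<^bsub>G\<^esub> h) (h z)" by simp
  also have "\<dots> = (inv\<^bsub>G\<^esub> h \<circ> h) z" by simp
  also have "\<dots> = z" using inv_props(2)[OF hc] assms(2) by simp
  finally show ?case .
next
  case (eng h1 h2) then show ?case by simp
qed

lemma key1:
  assumes H: "\<forall>\<gamma>\<in>little_structure_group E e. \<forall>z\<in>e ` F. \<gamma> z = z"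
    and x: "x \<in> F" and p: "p \<in> E"
  shows "e (p (e x)) = e (p x)"
proof -
  obtain v where v: "v \<in> kerE E" "v \<in> E" "v \<circ> v = v" "v x = x" "v \<circ> e = v" "e \<circ> v = e"
    using fixv by blast
  have ve': "v (e z) = v z" for z using v(5) by (metis comp_apply)
  have ev': "e (v z) = e z" for z using v(6) by (metis comp_apply)
  let ?c = "e \<circ> p \<circ> v"
  let ?d = "e \<circ> p \<circ> e"
  have cc: "?c \<in> carrier G" unfolding carrier_iff
    using p v eE mult_E ee by (simp add: comp_assoc) (simp add: comp_assoc[symmetric])
  define ci where "ci = inv\<^bsub>G\<^esub> ?c"
  have cic: "ci \<in> carrier G" "ci \<circ> ?c = e" "?c \<circ> ci = e" using inv_props[OF cc] ci_def by auto
  have ciE: "ci \<in> E" "e \<circ> ci = ci" "ci \<circ> e = ci" using cic(1) carrier_iff by auto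
  have e_ci: "e (ci z) = ci z" for z using ciE(2) by (metis comp_apply)
  have ci_e: "ci (e z) = ci z" for z using ciE(3) by (metis comp_apply)
  have ci_pv: "ci (p (v z)) = e z" for z
  proof -
    have "ci (e (p (v z))) = e z" using cic(2) by (metis comp_apply)
    then show ?thesis by (simp add: ci_e)
  qed
  have c_ci: "e (p (v (ci z))) = e z" for z using cic(3) by (metis comp_apply)
  define m where "m = ci \<circ> e \<circ> p"
  define u where "u = v \<circ> m"
  have mE: "m \<in> E" unfolding m_def using ciE eE p mult_E by simp
  have uK: "u \<in> kerE E" unfolding u_def by (rule ker_rmul[OF v(1) mE])
  have uu: "u \<circ> u = u"
  proof
    fix z show "(u \<circ> u) z = u z"
      unfolding u_def m_def by (simp add: ci_e ci_pv e_ci)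
  qed
  have uJ: "u \<in> min_idempotents E" using uK uu by (simp add: min_idempotents_def)
  have eue: "e \<circ> u \<circ> e = ci \<circ> ?d"
  proof
    fix z show "(e \<circ> u \<circ> e) z = (ci \<circ> ?d) z"
      unfolding u_def m_def by (simp add: ci_e ev' e_ci)
  qed
  have "ci \<circ> ?d = e \<circ> u \<circ> e \<and> u \<in> min_idempotents E" using uJ eue by simp
  then have "\<exists>q. ci \<circ> ?d = e \<circ> q \<circ> e \<and> q \<in> min_idempotents E"
    by (rule exI[where P="\<lambda>q. ci \<circ> ?d = e \<circ> q \<circ> e \<and> q \<in> min_idempotents E"])
  then have "ci \<circ> ?d \<in> gens" by simp
  then have "ci \<circ> ?d \<in> little_structure_group E e"
    unfolding little_structure_group_def by (rule generate.incl)
  moreover have "e x \<in> e ` F" using x by blast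
  ultimately have "(ci \<circ> ?d) (e x) = e x" using H by blast
  then have H1: "ci (p (e x)) = e x" by (simp add: ci_e ee')
  have "e (p (v (ci (p (e x))))) = e (p (e x))" by (rule c_ci)
  then show ?thesis using H1 ve' v(4) by simp
qed

lemma key_backward:
  assumes H: "\<forall>\<gamma>\<in>little_structure_group E e. \<forall>z\<in>e ` F. \<gamma> z = z"
    and x: "x \<in> F" and y: "y \<in> F" and p: "p \<in> E" "p x = p y"
  shows "e x = e y"
proof -
  let ?d = "e \<circ> p \<circ> e"
  have d: "?d \<in> carrier G" using p by (auto simp: structure_group_def)
  let ?g = "inv\<^bsub>G\<^esub> ?d"
  have gd: "?g \<circ> ?d = e" using inv_props[OF d] by simp
  have "?d (e x) = ?d (e y)"
    using key1[OF H x p(1)] key1[OF H y p(1)] p(2) by (simp add: ee')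
  then have "(?g \<circ> ?d) (e x) = (?g \<circ> ?d) (e y)" by simp
  then show ?thesis using gd by (simp add: ee')
qed

lemma key_forward:
  assumes T: "transitive_on F (proximal \<alpha>)"
    and sat: "\<And>a b. proximal \<alpha> a b \<Longrightarrow> a \<in> F \<Longrightarrow> b \<in> F"
  shows "\<forall>\<gamma>\<in>little_structure_group E e. \<forall>z\<in>e ` F. \<gamma> z = z"
proof (intro ballI)
  fix \<gamma> z assume g: "\<gamma> \<in> little_structure_group E e" and z: "z \<in> e ` F"
  then obtain w where w: "w \<in> F" "z = e w" by blast
  have ez: "e z = z" using w ee' by simp
  show "\<gamma> z = z"
  proof (rule gen_fix[OF _ ez g])
    fix h assume "h \<in> gens"
    then obtain u where u: "u \<in> min_idempotents E" "h = e \<circ> u \<circ> e" by blast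
    have uE: "u \<in> E" using u kerE_sub by (auto simp: min_idempotents_def)
    have uu: "u (u a) = u a" for a using u by (simp add: min_idempotents_def) (metis comp_apply)
    have "proximal \<alpha> w z" using imp_prox[OF eE, of w z] w ee' by simp
    then have zF: "z \<in> F" using sat w by blast
    have p1: "proximal \<alpha> z (u z)" using imp_prox[OF uE, of z "u z"] uu by simp
    then have uzF: "u z \<in> F" using sat zF by blast
    have p2: "proximal \<alpha> (u z) (e (u z))" using imp_prox[OF eE, of "u z" "e (u z)"] ee' by simp
    then have euzF: "e (u z) \<in> F" using sat uzF by blast
    have "proximal \<alpha> z (e (u z))" using T zF uzF euzF p1 p2 unfolding transitive_on_def by blast
    then obtain p where "p \<in> E" "p z = p (e (u z))" using prox_imp by blast
    then have "z = e (u z)" using fixed_prox_eq[OF ez ee'] by blast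
    then show "h z = z" using u ez by simp
  qed
qed

end


lemma prox_small:
  assumes "proximal \<alpha> x y" "\<epsilon> > 0"
  shows "\<exists>t. dist (\<alpha> t x) (\<alpha> t y) < \<epsilon>"
proof -
  let ?f = "\<lambda>t. dist (\<alpha> t x) (\<alpha> t y)"
  have bdd: "bdd_below (range ?f)" by (auto intro: bdd_belowI[of _ 0])
  have "(INF t. ?f t) < \<epsilon>" using assms unfolding proximal_def by simp
  then show ?thesis using cINF_less_iff[OF _ bdd] by auto
qed

lemma prox_fibre:
  fixes \<alpha> :: "'g::group_add \<Rightarrow> 'x::metric_space \<Rightarrow> 'x"
    and \<beta> :: "'g \<Rightarrow> 'y::metric_space \<Rightarrow> 'y"
  assumes cpt: "compact (UNIV :: 'x set)"
    and mef: "max_equicontinuous_factor \<alpha> \<beta> \<pi>"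
    and pr: "proximal \<alpha> a b"
  shows "\<pi> a = \<pi> b"
proof (rule ccontr)
  assume ne: "\<pi> a \<noteq> \<pi> b"
  define \<epsilon> where "\<epsilon> = dist (\<pi> a) (\<pi> b)"
  have eps: "\<epsilon> > 0" using ne by (simp add: \<epsilon>_def)
  have fm: "factor_map_onto \<alpha> UNIV \<beta> \<pi>" and eq: "equicontinuous_on UNIV \<beta>"
    using mef by (auto simp: max_equicontinuous_factor_def)
  have cont: "continuous_on UNIV \<pi>" and equi: "\<And>t x. \<pi> (\<alpha> t x) = \<beta> t (\<pi> x)"
    and gb: "group_action_homeo_on UNIV \<beta>"
    using fm by (auto simp: factor_map_onto_def)
  have b0: "\<beta> 0 z = z" for z using gb by (simp add: group_action_homeo_on_def)
  have bst: "\<beta> (s + t) z = \<beta> s (\<beta> t z)" for s t z using gb by (simp add: group_action_homeo_on_def)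
  obtain \<delta> where d: "\<delta> > 0" "\<And>y y' t. dist y y' < \<delta> \<Longrightarrow> dist (\<beta> t y) (\<beta> t y') < \<epsilon>"
    using eq eps unfolding equicontinuous_on_def by blast
  have uc: "uniformly_continuous_on UNIV \<pi>" by (rule compact_uniformly_continuous[OF cont cpt])
  obtain \<eta> where h: "\<eta> > 0" "\<And>x x'. dist x' x < \<eta> \<Longrightarrow> dist (\<pi> x') (\<pi> x) < \<delta>"
    using uc d(1) unfolding uniformly_continuous_on_def by blast
  obtain t where t: "dist (\<alpha> t a) (\<alpha> t b) < \<eta>" using prox_small[OF pr h(1)] by blast
  have "dist (\<pi> (\<alpha> t a)) (\<pi> (\<alpha> t b)) < \<delta>" using h(2) t by blast
  then have "dist (\<beta> t (\<pi> a)) (\<beta> t (\<pi> b)) < \<delta>" by (simp add: equi)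
  then have "dist (\<beta> (-t) (\<beta> t (\<pi> a))) (\<beta> (-t) (\<beta> t (\<pi> b))) < \<epsilon>" by (rule d(2))
  moreover have "\<beta> (-t) (\<beta> t z) = z" for z using bst[of "-t" t z] b0 by simp
  ultimately have "dist (\<pi> a) (\<pi> b) < \<epsilon>" by simp
  then show False by (simp add: \<epsilon>_def)
qed

theorem mainTheorem3:
  fixes \<alpha> :: "'g::group_add \<Rightarrow> 'x::metric_space \<Rightarrow> 'x"
    and \<beta> :: "'g \<Rightarrow> 'y::metric_space \<Rightarrow> 'y"
    and \<pi> :: "'x \<Rightarrow> 'y"
    and e :: "'x \<Rightarrow> 'x"
    and \<xi> :: 'y
  assumes "compact (UNIV :: 'x set)"
    and "group_action_homeo \<alpha>"
    and "minimal_system \<alpha>"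
    and "max_equicontinuous_factor \<alpha> \<beta> \<pi>"
    and "e \<in> min_idempotents (ellis \<alpha>)"
  shows "(transitive_on (\<pi> -` {\<xi>}) (proximal \<alpha>) \<longleftrightarrow>
           (\<forall>g \<in> little_structure_group (ellis \<alpha>) e. \<forall>x \<in> e ` (\<pi> -` {\<xi>}). g x = x))
       \<and> (transitive_on UNIV (proximal \<alpha>) \<longleftrightarrow> little_structure_group (ellis \<alpha>) e = {e})"
proof -
  interpret M: ellis_min \<alpha> e
    using assms by unfold_locales auto
  have pf: "\<pi> a = \<pi> b" if "proximal \<alpha> a b" for a b
    by (rule prox_fibre[OF assms(1) assms(4) that])
  have A: "transitive_on (\<pi> -` {\<zeta>}) (proximal \<alpha>) \<longleftrightarrow>
           (\<forall>g \<in> little_structure_group (ellis \<alpha>) e. \<forall>x \<in> e ` (\<pi> -` {\<zeta>}). g x = x)" for \<zeta>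
  proof
    assume T: "transitive_on (\<pi> -` {\<zeta>}) (proximal \<alpha>)"
    show "\<forall>g \<in> little_structure_group (ellis \<alpha>) e. \<forall>x \<in> e ` (\<pi> -` {\<zeta>}). g x = x"
      by (rule M.key_forward[OF T]) (use pf in auto)
  next
    assume H: "\<forall>g \<in> little_structure_group (ellis \<alpha>) e. \<forall>x \<in> e ` (\<pi> -` {\<zeta>}). g x = x"
    show "transitive_on (\<pi> -` {\<zeta>}) (proximal \<alpha>)" unfolding transitive_on_def
    proof (intro ballI impI)
      fix x y z assume xyz: "x \<in> \<pi> -` {\<zeta>}" "y \<in> \<pi> -` {\<zeta>}" "z \<in> \<pi> -` {\<zeta>}"
        and p1: "proximal \<alpha> x y" and p2: "proximal \<alpha> y z"
      obtain p where p: "p \<in> ellis \<alpha>" "p x = p y" using M.prox_imp[OF p1] by blast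
      obtain q where q: "q \<in> ellis \<alpha>" "q y = q z" using M.prox_imp[OF p2] by blast
      have "e x = e y" by (rule M.key_backward[OF H xyz(1) xyz(2) p])
      moreover have "e y = e z" by (rule M.key_backward[OF H xyz(2) xyz(3) q])
      ultimately have "e x = e z" by simp
      then show "proximal \<alpha> x z" by (rule M.imp_prox[OF M.eE])
    qed
  qed
  have B: "transitive_on UNIV (proximal \<alpha>) \<longleftrightarrow> little_structure_group (ellis \<alpha>) e = {e}"
  proof
    assume T: "transitive_on UNIV (proximal \<alpha>)"
    have fix_all: "g (e w) = e w" if g: "g \<in> little_structure_group (ellis \<alpha>) e" for g w
    proof -
      have "transitive_on (\<pi> -` {\<pi> w}) (proximal \<alpha>)"
        using T unfolding transitive_on_def by blast
      then have "\<forall>g \<in> little_structure_group (ellis \<alpha>) e. \<forall>x \<in> e ` (\<pi> -` {\<pi> w}). g x = x"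
        using A by blast
      moreover have "e w \<in> e ` (\<pi> -` {\<pi> w})" by blast
      ultimately show ?thesis using g by blast
    qed
    show "little_structure_group (ellis \<alpha>) e = {e}"
    proof
      show "little_structure_group (ellis \<alpha>) e \<subseteq> {e}"
      proof
        fix g assume g: "g \<in> little_structure_group (ellis \<alpha>) e"
        then have "g \<in> carrier M.G" using M.Gamma_sub by blast
        then have ge: "g \<circ> e = g" using M.carrier_iff by blast
        have "g w = e w" for w
        proof -
          have "g w = (g \<circ> e) w" using ge by simp
          also have "\<dots> = e w" using fix_all[OF g] by simp
          finally show ?thesis .
        qed
        then have "g = e" by (rule ext)
        then show "g \<in> {e}" by simp
      qed
      have "\<one>\<^bsub>M.G\<^esub> \<in> little_structure_group (ellis \<alpha>) e"
        unfolding little_structure_group_def by (rule generate.one)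
      then show "{e} \<subseteq> little_structure_group (ellis \<alpha>) e" by simp
    qed
  next
    assume G1: "little_structure_group (ellis \<alpha>) e = {e}"
    show "transitive_on UNIV (proximal \<alpha>)" unfolding transitive_on_def
    proof (intro ballI impI)
      fix x y z assume p1: "proximal \<alpha> x y" and p2: "proximal \<alpha> y z"
      have H: "\<forall>g \<in> little_structure_group (ellis \<alpha>) e. \<forall>x' \<in> e ` (\<pi> -` {\<pi> x}). g x' = x'"
        using G1 M.ee' by auto
      have "transitive_on (\<pi> -` {\<pi> x}) (proximal \<alpha>)" using A H by blast
      moreover have "y \<in> \<pi> -` {\<pi> x}" "z \<in> \<pi> -` {\<pi> x}" using pf[OF p1] pf[OF p2] by auto
      ultimately show "proximal \<alpha> x z" using p1 p2 unfolding transitive_on_def by blast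
    qed
  qed
  show ?thesis using A B by blast
qed


end
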